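(* For each equivalence class of the relation $\alpha\sim\gamma\iff\mathsf{rajcode}(\alpha)=\mathsf{rajcode}(\gamma)$ on weak compositions, there is a unique snowy $\alpha$ in the class. Moreover, if $\gamma\sim\alpha$ and $\alpha$ is snowy, then $\gamma_r\ge\alpha_r$ for all $r$.
   Context: A weak composition is an infinite sequence of nonnegative integers with finitely many positive entries; it is snowy if its positive entries are distinct. $D(\alpha)=\{(r,c):1\le c\le\alpha_r\}$ ($(r,c)$ in row $r$, row 1 on top, column $c$). For a diagram $D$, $\mathsf{snow}(D)$ is built by iterating through rows from bottom to top: in row $r$ take the rightmost cell $(r,c)\in D$ such that column $c$ contains no dark cloud yet; if it exists label it a dark cloud and add snowflake cells at $(r',c)$ for all $r'<r$ with $(r',c)\notin D$. $\mathsf{rajcode}(\alpha)$ is the weak composition whose $i$-th entry is the number of cells of $\mathsf{snow}(D(\alpha))$ in row $i$. *)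

theory Defs
  imports Main
begin

text \<open>Weak compositions: sequences nat => nat with finite support.
  Row index 0 is the top row (the paper's row 1); columns are 1-based.\<close>

definition weak_comp :: "(nat \<Rightarrow> nat) \<Rightarrow> bool" where
  "weak_comp \<alpha> \<longleftrightarrow> finite {r. \<alpha> r \<noteq> 0}"

definition snowy :: "(nat \<Rightarrow> nat) \<Rightarrow> bool" where
  "snowy \<alpha> \<longleftrightarrow> (\<forall>i j. i \<noteq> j \<longrightarrow> 0 < \<alpha> i \<longrightarrow> 0 < \<alpha> j \<longrightarrow> \<alpha> i \<noteq> \<alpha> j)"

definition diagram :: "(nat \<Rightarrow> nat) \<Rightarrow> (nat \<times> nat) set" where
  "diagram \<alpha> = {(r, c). 1 \<le> c \<and> c \<le> \<alpha> r}"

definition dark_in_row :: "(nat \<times> nat) set \<Rightarrow> nat set \<Rightarrow> nat \<Rightarrow> nat option" where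
  "dark_in_row D C r =
     (if {c. (r, c) \<in> D \<and> c \<notin> C} = {} then None
      else Some (Max {c. (r, c) \<in> D \<and> c \<notin> C}))"

text \<open>cloud_cols D r k: columns containing dark clouds after processing rows
  r+k-1, r+k-2, ..., r (bottom to top).\<close>
fun cloud_cols :: "(nat \<times> nat) set \<Rightarrow> nat \<Rightarrow> nat \<Rightarrow> nat set" where
  "cloud_cols D r 0 = {}"
| "cloud_cols D r (Suc k) =
     (let C = cloud_cols D (Suc r) k in
      case dark_in_row D C r of None \<Rightarrow> C | Some c \<Rightarrow> insert c C)"

definition row_bound :: "(nat \<times> nat) set \<Rightarrow> nat" where
  "row_bound D = (if D = {} then 0 else Suc (Max (fst ` D)))"

text \<open>Column of the dark cloud in row r (processing all nonempty rows below r first).\<close>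
definition dark_col :: "(nat \<times> nat) set \<Rightarrow> nat \<Rightarrow> nat option" where
  "dark_col D r = dark_in_row D (cloud_cols D (Suc r) (row_bound D)) r"

definition snow :: "(nat \<times> nat) set \<Rightarrow> (nat \<times> nat) set" where
  "snow D = D \<union> {(r', c). (\<exists>r. r' < r \<and> dark_col D r = Some c) \<and> (r', c) \<notin> D}"

definition rajcode :: "(nat \<Rightarrow> nat) \<Rightarrow> nat \<Rightarrow> nat" where
  "rajcode \<alpha> i = card {c. (i, c) \<in> snow (diagram \<alpha>)}"

end

theory Submission
  imports Defs
begin

definition SS :: "(nat \<Rightarrow> nat) \<Rightarrow> nat \<Rightarrow> nat set" where
  "SS g j = cloud_cols (diagram g) j (row_bound (diagram g))"

lemma diagram_Sigma: "diagram g = (SIGMA r:{r. g r \<noteq> 0}. {1..g r})"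
  unfolding diagram_def by auto

lemma finite_diagram: "weak_comp g \<Longrightarrow> finite (diagram g)"
  unfolding diagram_Sigma weak_comp_def by auto

lemma rb_bound: assumes "weak_comp g" "g r \<noteq> 0" shows "r < row_bound (diagram g)"
proof -
  have m: "(r, 1) \<in> diagram g" using assms(2) unfolding diagram_def by auto
  then have "r \<le> Max (fst ` diagram g)"
    using finite_diagram[OF assms(1)] by (metis Max_ge finite_imageI fst_conv image_eqI)
  then show ?thesis using m unfolding row_bound_def by auto
qed

lemma dir_diag: "dark_in_row (diagram g) C r =
  (if {c. 1 \<le> c \<and> c \<le> g r \<and> c \<notin> C} = {} then None
   else Some (Max {c. 1 \<le> c \<and> c \<le> g r \<and> c \<notin> C}))"
  unfolding dark_in_row_def diagram_def by simp

lemma dir_zero: "g r = 0 \<Longrightarrow> dark_in_row (diagram g) C r = None"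
  unfolding dir_diag by auto

lemma cc_stable1:
  assumes "weak_comp g" "row_bound (diagram g) \<le> r + k"
  shows "cloud_cols (diagram g) r (Suc k) = cloud_cols (diagram g) r k"
  using assms(2)
proof (induction k arbitrary: r)
  case 0
  then have "g r = 0" using rb_bound[OF assms(1)] by force
  then show ?case by (simp add: dir_zero)
next
  case (Suc k)
  have "cloud_cols (diagram g) (Suc r) (Suc k) = cloud_cols (diagram g) (Suc r) k"
    using Suc by auto
  then show ?case by (simp only: cloud_cols.simps)
qed

lemma cc_stable:
  assumes "weak_comp g" "row_bound (diagram g) \<le> r + k"
  shows "cloud_cols (diagram g) r (k + m) = cloud_cols (diagram g) r k"
  using assms cc_stable1 by (induction m) auto

lemma SS_rec: assumes "weak_comp g"
  shows "SS g r = (case dark_col (diagram g) r of None \<Rightarrow> SS g (Suc r) | Some c \<Rightarrow> insert c (SS g (Suc r)))"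
proof -
  let ?B = "row_bound (diagram g)"
  have "SS g r = cloud_cols (diagram g) r (Suc ?B)"
    unfolding SS_def using cc_stable1[OF assms, of r ?B] by simp
  then show ?thesis unfolding dark_col_def SS_def by (simp add: Let_def)
qed

lemma SS_big: assumes "weak_comp g" "row_bound (diagram g) \<le> r" shows "SS g r = {}"
  unfolding SS_def using cc_stable[OF assms(1), of r 0 "row_bound (diagram g)"] assms(2) by simp

lemma dark_col_SS: "dark_col (diagram g) r = dark_in_row (diagram g) (SS g (Suc r)) r"
  unfolding dark_col_def SS_def by simp

lemma dark_col_zero: "g r = 0 \<Longrightarrow> dark_col (diagram g) r = None"
  unfolding dark_col_SS by (rule dir_zero)

lemma SS_mem: assumes "weak_comp g"
  shows "c \<in> SS g j \<longleftrightarrow> (\<exists>r\<ge>j. dark_col (diagram g) r = Some c)"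
proof (induction "row_bound (diagram g) - j" arbitrary: j)
  case 0
  then have "SS g j = {}" using SS_big[OF assms] by auto
  moreover have "dark_col (diagram g) r = None" if "r \<ge> j" for r
    using 0 that rb_bound[OF assms, of r] dark_col_zero[of g r] by force
  ultimately show ?case by auto
next
  case (Suc n)
  then have IH: "c \<in> SS g (Suc j) \<longleftrightarrow> (\<exists>r\<ge>Suc j. dark_col (diagram g) r = Some c)" by auto
  have "c \<in> SS g j \<longleftrightarrow> dark_col (diagram g) j = Some c \<or> c \<in> SS g (Suc j)"
    using SS_rec[OF assms, of j] by (cases "dark_col (diagram g) j") auto
  also have "\<dots> \<longleftrightarrow> (\<exists>r\<ge>j. dark_col (diagram g) r = Some c)"
    using IH by (metis Suc_le_eq le_eq_less_or_eq)
  finally show ?case .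
qed

lemma finite_cc: "finite (cloud_cols D r k)"
  by (induction k arbitrary: r) (auto simp: Let_def split: option.split)

lemma finite_SS: "finite (SS g j)"
  unfolding SS_def by (rule finite_cc)

lemma dark_Some:
  assumes "dark_col (diagram g) r = Some c"
  shows "1 \<le> c \<and> c \<le> g r \<and> c \<notin> SS g (Suc r) \<and> (\<forall>c'. c < c' \<and> c' \<le> g r \<longrightarrow> c' \<in> SS g (Suc r))"
proof -
  let ?A = "{c. 1 \<le> c \<and> c \<le> g r \<and> c \<notin> SS g (Suc r)}"
  have ne: "?A \<noteq> {}" and c: "c = Max ?A" using assms unfolding dark_col_SS dir_diag
    by (auto split: if_splits)
  have f: "finite ?A" by (rule finite_subset[of _ "{..g r}"]) auto
  have "c \<in> ?A" using Max_in[OF f ne] c by simp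
  moreover have "c' \<in> SS g (Suc r)" if "c < c'" "c' \<le> g r" for c'
  proof (rule ccontr)
    assume "c' \<notin> SS g (Suc r)"
    then have "c' \<in> ?A" using that by auto
    then have "c' \<le> c" using Max_ge[OF f] c by simp
    then show False using that by simp
  qed
  ultimately show ?thesis by auto
qed

lemma dark_None:
  assumes "dark_col (diagram g) r = None" "1 \<le> c" "c \<le> g r"
  shows "c \<in> SS g (Suc r)"
  using assms unfolding dark_col_SS dir_diag by (auto split: if_splits)

lemma SS_pos: assumes "weak_comp g" "c \<in> SS g j" shows "1 \<le> c"
  using assms SS_mem dark_Some by blast


lemma rajcode_formula: assumes "weak_comp g"
  shows "rajcode g i = g i + card {c \<in> SS g (Suc i). g i < c}"
proof -
  have "{c. (i, c) \<in> snow (diagram g)} = {1..g i} \<union> {c \<in> SS g (Suc i). g i < c}"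
  proof -
    have "(i, c) \<in> snow (diagram g) \<longleftrightarrow> c \<in> {1..g i} \<union> {c \<in> SS g (Suc i). g i < c}" for c
    proof -
      have "(\<exists>r. i < r \<and> dark_col (diagram g) r = Some c) \<longleftrightarrow> c \<in> SS g (Suc i)"
        using SS_mem[OF assms] by (metis Suc_le_eq)
      then show ?thesis using SS_pos[OF assms, of c "Suc i"]
        unfolding snow_def diagram_def by auto
    qed
    then show ?thesis by blast
  qed
  moreover have "card ({1..g i} \<union> {c \<in> SS g (Suc i). g i < c}) = g i + card {c \<in> SS g (Suc i). g i < c}"
    by (subst card_Un_disjoint) (auto intro: finite_subset[OF _ finite_SS])
  ultimately show ?thesis unfolding rajcode_def by simp
qed

definition bet :: "(nat \<Rightarrow> nat) \<Rightarrow> nat \<Rightarrow> nat" where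
  "bet g r = (case dark_col (diagram g) r of None \<Rightarrow> 0 | Some c \<Rightarrow> c)"

lemma bet_le: "bet g r \<le> g r"
  unfolding bet_def using dark_Some[of g r] by (auto split: option.split)

lemma bet_wc: "weak_comp g \<Longrightarrow> weak_comp (bet g)"
  unfolding weak_comp_def using bet_le
  by (metis (mono_tags, lifting) le_zero_eq mem_Collect_eq rev_finite_subset subsetI)

lemma bet_snowy: assumes "weak_comp g" shows "snowy (bet g)"
proof -
  have *: False if h: "i < j" "0 < bet g i" "bet g i = bet g j" for i j
  proof -
    obtain c where ci: "dark_col (diagram g) i = Some c"
      using h(2) unfolding bet_def by (cases "dark_col (diagram g) i") auto
    then have "bet g i = c" unfolding bet_def by simp
    moreover have "dark_col (diagram g) j = Some c"
      using h calculation unfolding bet_def by (auto split: option.splits)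
    ultimately have "c \<in> SS g (Suc i)" using SS_mem[OF assms] h(1) by (metis Suc_le_eq)
    then show False using dark_Some[OF ci] by auto
  qed
  show ?thesis unfolding snowy_def
    by (metis * linorder_neqE_nat)
qed

lemma snowy_dark: assumes "weak_comp a" "snowy a"
  shows "dark_col (diagram a) r = (if a r = 0 then None else Some (a r))"
proof (induction "row_bound (diagram a) - r" arbitrary: r rule: less_induct)
  case less
  show ?case
  proof (cases "a r = 0")
    case True
    then show ?thesis using dark_col_zero by simp
  next
    case False
    then have rB: "r < row_bound (diagram a)" using rb_bound[OF assms(1)] by simp
    have "a r \<notin> SS a (Suc r)"
    proof
      assume "a r \<in> SS a (Suc r)"
      then obtain r' where "r' \<ge> Suc r" "dark_col (diagram a) r' = Some (a r)"
        using SS_mem[OF assms(1)] by blast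
      moreover have "dark_col (diagram a) r' = (if a r' = 0 then None else Some (a r'))"
        using less rB calculation(1) by simp
      ultimately show False using assms(2) False unfolding snowy_def
        by (metis Suc_le_eq less_irrefl option.distinct(1) option.inject zero_less_iff_neq_zero)
    qed
    then have "{c. 1 \<le> c \<and> c \<le> a r \<and> c \<notin> SS a (Suc r)} \<noteq> {}"
       and "Max {c. 1 \<le> c \<and> c \<le> a r \<and> c \<notin> SS a (Suc r)} = a r"
      using False by (auto intro!: Max_eqI)
    then show ?thesis unfolding dark_col_SS dir_diag using False by simp
  qed
qed

lemma snowy_SS: assumes "weak_comp a" "snowy a"
  shows "SS a (Suc i) = {a r | r. i < r \<and> 0 < a r}"
proof (rule set_eqI)
  fix c
  have "c \<in> SS a (Suc i) \<longleftrightarrow> (\<exists>r>i. dark_col (diagram a) r = Some c)"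
    using SS_mem[OF assms(1)] by (metis Suc_le_eq)
  also have "\<dots> \<longleftrightarrow> (\<exists>r>i. a r \<noteq> 0 \<and> a r = c)"
    using snowy_dark[OF assms] by auto
  finally show "c \<in> SS a (Suc i) \<longleftrightarrow> c \<in> {a r | r. i < r \<and> 0 < a r}" by auto
qed

lemma card_split:
  assumes "finite S" "a \<le> g" "{a<..g} \<subseteq> S"
  shows "card {c \<in> S. a < c} = (g - a) + card {c \<in> S. g < c}"
proof -
  have "{c \<in> S. a < c} = {a<..g} \<union> {c \<in> S. g < c}" using assms by auto
  moreover have "card ({a<..g} \<union> {c \<in> S. g < c}) = card {a<..g} + card {c \<in> S. g < c}"
    by (rule card_Un_disjoint) (use assms(1) in auto)
  ultimately show ?thesis by simp
qed

lemma bet_SS: assumes "weak_comp g" shows "SS (bet g) (Suc i) = SS g (Suc i)"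
proof -
  have "SS (bet g) (Suc i) = {bet g r | r. i < r \<and> 0 < bet g r}"
    by (rule snowy_SS[OF bet_wc[OF assms] bet_snowy[OF assms]])
  also have "\<dots> = SS g (Suc i)"
  proof (rule set_eqI)
    fix c
    have "c \<in> SS g (Suc i) \<longleftrightarrow> (\<exists>r>i. dark_col (diagram g) r = Some c)"
      using SS_mem[OF assms] by (metis Suc_le_eq)
    moreover have "dark_col (diagram g) r = Some c \<longleftrightarrow> (0 < bet g r \<and> bet g r = c)" for r
    proof (cases "dark_col (diagram g) r")
      case None then show ?thesis unfolding bet_def by auto
    next
      case (Some x) then show ?thesis unfolding bet_def using dark_Some[OF Some] by auto
    qed
    ultimately show "c \<in> {bet g r | r. i < r \<and> 0 < bet g r} \<longleftrightarrow> c \<in> SS g (Suc i)" by auto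
  qed
  finally show ?thesis .
qed


lemma rajcode_bet: assumes "weak_comp g" shows "rajcode (bet g) = rajcode g"
proof
  fix i
  let ?S = "SS g (Suc i)"
  have "rajcode (bet g) i = bet g i + card {c \<in> ?S. bet g i < c}"
    using rajcode_formula[OF bet_wc[OF assms]] bet_SS[OF assms] by simp
  also have "\<dots> = g i + card {c \<in> ?S. g i < c}"
  proof (cases "dark_col (diagram g) i")
    case None
    then have "{0<..g i} \<subseteq> ?S" using dark_None[OF None] by auto
    then show ?thesis using card_split[OF finite_SS, of 0 "g i"] None unfolding bet_def by simp
  next
    case (Some x)
    then have "{x<..g i} \<subseteq> ?S" "x \<le> g i" using dark_Some[OF Some] by auto
    then show ?thesis using card_split[OF finite_SS, of x "g i"] Some unfolding bet_def by simp
  qed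
  also have "\<dots> = rajcode g i" using rajcode_formula[OF assms] by simp
  finally show "rajcode (bet g) i = rajcode g i" .
qed

lemma inj_arith_lt:
  assumes "finite T" "b \<notin> T" "a < (b::nat)"
  shows "a + card {c \<in> T. a < c} < b + card {c \<in> T. b < c}"
proof -
  have "{c \<in> T. a < c} \<subseteq> {a<..<b} \<union> {c \<in> T. b < c}"
  proof
    fix x assume x: "x \<in> {c \<in> T. a < c}"
    then have "x \<noteq> b" using assms(2) by auto
    then show "x \<in> {a<..<b} \<union> {c \<in> T. b < c}" using x by (auto simp: nat_neq_iff)
  qed
  then have "card {c \<in> T. a < c} \<le> card ({a<..<b} \<union> {c \<in> T. b < c})"
    by (rule card_mono[rotated]) (use assms(1) in auto)
  also have "\<dots> \<le> card {a<..<b} + card {c \<in> T. b < c}" by (rule card_Un_le)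
  finally show ?thesis using assms(3) by simp
qed

lemma inj_arith:
  assumes "finite T" "a \<notin> T" "b \<notin> T" "a + card {c \<in> T. a < c} = b + card {c \<in> T. (b::nat) < c}"
  shows "a = b"
  using inj_arith_lt[OF assms(1) assms(3), of a] inj_arith_lt[OF assms(1) assms(2), of b] assms(4)
  by (metis less_irrefl linorder_neqE_nat)

lemma snowy_unique:
  assumes "weak_comp a" "weak_comp a'" "snowy a" "snowy a'" "rajcode a = rajcode a'"
  shows "a = a'"
proof
  let ?B = "max (row_bound (diagram a)) (row_bound (diagram a'))"
  fix i
  show "a i = a' i"
  proof (induction "?B - i" arbitrary: i rule: less_induct)
    case less
    show ?case
    proof (cases "?B \<le> i")
      case True
      then show ?thesis using rb_bound[OF assms(1), of i] rb_bound[OF assms(2), of i] by force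
    next
      case False
      have eq: "a r = a' r" if "i < r" for r
      proof -
        have "?B - r < ?B - i" using that False by linarith
        then show ?thesis using less by blast
      qed
      let ?T = "{a r | r. i < r \<and> 0 < a r}"
      have Teq: "{a' r | r. i < r \<and> 0 < a' r} = ?T"
        using eq by (auto; metis)
      have T: "SS a (Suc i) = ?T" "SS a' (Suc i) = ?T"
        using snowy_SS[OF assms(1,3), of i] snowy_SS[OF assms(2,4), of i] Teq by auto
      have fT: "finite ?T" using finite_SS T by metis
      have na: "a i \<notin> ?T"
      proof
        assume "a i \<in> ?T"
        then obtain r where "a i = a r" "i < r" "0 < a r" by auto
        then show False using assms(3) unfolding snowy_def by (metis less_irrefl)
      qed
      have na': "a' i \<notin> ?T"
      proof
        assume "a' i \<in> ?T"
        then obtain r where "a' i = a r" "i < r" "0 < a r" by auto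
        then show False using assms(4) eq unfolding snowy_def by (metis less_irrefl)
      qed
      have "a i + card {c \<in> ?T. a i < c} = a' i + card {c \<in> ?T. a' i < c}"
        using rajcode_formula[OF assms(1), of i] rajcode_formula[OF assms(2), of i] assms(5) T
        by simp
      then show ?thesis using inj_arith[OF fT na na'] by simp
    qed
  qed
qed

theorem lemma4p5:
  shows "(\<forall>\<gamma>. weak_comp \<gamma> \<longrightarrow>
            (\<exists>!\<alpha>. weak_comp \<alpha> \<and> snowy \<alpha> \<and> rajcode \<alpha> = rajcode \<gamma>))
       \<and> (\<forall>\<alpha> \<gamma>. weak_comp \<alpha> \<longrightarrow> weak_comp \<gamma> \<longrightarrow> snowy \<alpha> \<longrightarrow>
            rajcode \<gamma> = rajcode \<alpha> \<longrightarrow> (\<forall>r. \<gamma> r \<ge> \<alpha> r))"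
proof (intro conjI allI impI)
  fix g :: "nat \<Rightarrow> nat" assume g: "weak_comp g"
  show "\<exists>!\<alpha>. weak_comp \<alpha> \<and> snowy \<alpha> \<and> rajcode \<alpha> = rajcode g"
  proof (rule ex1I[of _ "bet g"])
    show "weak_comp (bet g) \<and> snowy (bet g) \<and> rajcode (bet g) = rajcode g"
      using bet_wc[OF g] bet_snowy[OF g] rajcode_bet[OF g] by simp
  next
    fix a assume "weak_comp a \<and> snowy a \<and> rajcode a = rajcode g"
    then show "a = bet g"
      using snowy_unique[of a "bet g"] bet_wc[OF g] bet_snowy[OF g] rajcode_bet[OF g] by simp
  qed
next
  fix a g :: "nat \<Rightarrow> nat" and r
  assume a: "weak_comp a" and g: "weak_comp g" and s: "snowy a" and rc: "rajcode g = rajcode a"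
  have "a = bet g"
    using snowy_unique[of a "bet g"] bet_wc[OF g] bet_snowy[OF g] rajcode_bet[OF g] a s rc by simp
  then show "a r \<le> g r" using bet_le by simp
qed

end
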